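(* Let $(X,d)$ be a complete metric space, let $F:(0,\infty)\to\mathbb{R}$ be nondecreasing, and let $\varphi:(0,\infty)\to(0,\infty)$ satisfy: for every strictly decreasing sequence $(t_n)_{n\in\mathbb{N}}\subset(0,\infty)$, $\lim_{n\to\infty}\varphi(t_n)=0$ implies $\lim_{n\to\infty}t_n=0$. Let $T:X\to X$ satisfy, for all $x,y\in X$ with $Tx\neq Ty$, $$\varphi(d(x,y))+F(d(Tx,Ty))\le F(d(x,y)).$$ Then $T$ is a Picard operator.
   Context: $T$ is a Picard operator if $T$ has a unique fixed point $u\in X$ and for every $x\in X$ the sequence $(T^nx)_{n\in\mathbb{N}}$ converges to $u$. *)

theory Defs
  imports "HOL-Analysis.Analysis"
begin

definition picard_operator :: "('a::metric_space \<Rightarrow> 'a) \<Rightarrow> bool" where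
  "picard_operator T \<longleftrightarrow>
     (\<exists>u. T u = u \<and> (\<forall>v. T v = v \<longrightarrow> v = u) \<and>
          (\<forall>x. (\<lambda>n. (T ^^ n) x) \<longlonglongrightarrow> u))"

end

theory Submission
  imports Defs
begin

lemma lemL:
  fixes F \<phi> :: "real \<Rightarrow> real" and a :: "nat \<Rightarrow> real"
  assumes F_mono: "mono_on {0<..} F"
    and \<phi>_pos: "\<forall>t>0. \<phi> t > 0"
    and \<phi>_prop: "\<forall>t :: nat \<Rightarrow> real. (\<forall>n. t n > 0) \<and> (\<forall>n. t (Suc n) < t n) \<longrightarrow>
                 ((\<lambda>n. \<phi> (t n)) \<longlonglongrightarrow> 0) \<longrightarrow> (t \<longlonglongrightarrow> 0)"
    and pos: "\<forall>n. a n > 0" and dec: "\<forall>n. a (Suc n) < a n"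
    and ineq: "\<forall>n. \<phi> (a n) \<le> F (a n) - F (a (Suc n))"
  shows "a \<longlonglongrightarrow> 0"
proof (cases "\<exists>e>0. \<forall>n. e \<le> a n")
  case True
  then obtain e where e: "e > 0" "\<forall>n. e \<le> a n" by blast
  have ps: "(\<Sum>k\<le>n. \<phi> (a k)) \<le> F (a 0) - F (a (Suc n))" for n
  proof (induction n)
    case 0 then show ?case using ineq by simp
  next
    case (Suc n) then show ?case using ineq[rule_format, of "Suc n"] by simp
  qed
  have "F e \<le> F (a (Suc n))" for n
    by (rule mono_onD[OF F_mono]) (use e pos in auto)
  note Fe = this
  have "(\<Sum>k\<le>n. \<phi> (a k)) \<le> F (a 0) - F e" for n
    using ps[of n] Fe[of n] by linarith
  moreover have "\<phi> (a n) \<ge> 0" for n using \<phi>_pos pos by (simp add: less_imp_le)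
  ultimately have "summable (\<lambda>n. \<phi> (a n))"
    by (intro bounded_imp_summable) auto
  then have "(\<lambda>n. \<phi> (a n)) \<longlonglongrightarrow> 0" by (rule summable_LIMSEQ_zero)
  then show ?thesis using \<phi>_prop pos dec by blast
next
  case False
  have d: "decseq a" using dec by (intro decseq_SucI) (simp add: less_imp_le)
  show ?thesis
  proof (rule LIMSEQ_I)
    fix r :: real assume r: "r > 0"
    then obtain n0 where "a n0 < r" using False by (meson not_le)
    have "\<forall>n\<ge>n0. norm (a n - 0) < r"
    proof (intro allI impI)
      fix n assume "n0 \<le> n"
      then have "a n \<le> a n0" using decseqD[OF d] by blast
      then show "norm (a n - 0) < r" using pos \<open>a n0 < r\<close> by (simp add: less_imp_le)
    qed
    then show "\<exists>no. \<forall>n\<ge>no. norm (a n - 0) < r" by blast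
  qed
qed

theorem mainTheorem8:
  fixes T :: "'a::complete_space \<Rightarrow> 'a"
    and F :: "real \<Rightarrow> real"
    and \<phi> :: "real \<Rightarrow> real"
  assumes F_mono: "mono_on {0<..} F"
    and \<phi>_pos: "\<forall>t>0. \<phi> t > 0"
    and \<phi>_prop: "\<forall>t :: nat \<Rightarrow> real. (\<forall>n. t n > 0) \<and> (\<forall>n. t (Suc n) < t n) \<longrightarrow>
                 ((\<lambda>n. \<phi> (t n)) \<longlonglongrightarrow> 0) \<longrightarrow> (t \<longlonglongrightarrow> 0)"
    and contr: "\<forall>x y. T x \<noteq> T y \<longrightarrow> \<phi> (dist x y) + F (dist (T x) (T y)) \<le> F (dist x y)"
  shows "picard_operator T"
proof -
  have strict: "dist (T x) (T y) < dist x y" if "x \<noteq> y" for x y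
  proof (cases "T x = T y")
    case True then show ?thesis using that by simp
  next
    case False
    have p: "\<phi> (dist x y) > 0" using \<phi>_pos that by simp
    have "F (dist (T x) (T y)) < F (dist x y)" using contr[rule_format, OF False] p by linarith
    moreover have "dist x y \<le> dist (T x) (T y) \<Longrightarrow> F (dist x y) \<le> F (dist (T x) (T y))"
      using False that by (intro mono_onD[OF F_mono]) auto
    ultimately show ?thesis by linarith
  qed
  have weak: "dist (T x) (T y) \<le> dist x y" for x y
    using strict[of x y] by (cases "x = y") auto
  have uniq: "u = v" if "T u = u" "T v = v" for u v
    using strict[of u v] that by (cases "u = v") auto
  have MK: "\<exists>\<delta>>0. \<forall>x y. \<epsilon> < dist x y \<and> dist x y < \<epsilon> + \<delta> \<longrightarrow> dist (T x) (T y) \<le> \<epsilon>"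
    if eps: "\<epsilon> > 0" for \<epsilon>
  proof (rule ccontr)
    assume neg: "\<not> ?thesis"
    define P where "P = (\<lambda>(a::real) (b::real). \<epsilon> < b \<and> b < a \<and> \<phi> a + F b \<le> F a)"
    have H: "\<exists>a b. P a b \<and> a < \<epsilon> + \<delta>" if "\<delta> > 0" for \<delta>
    proof -
      obtain x y where xy: "\<epsilon> < dist x y" "dist x y < \<epsilon> + \<delta>" "dist (T x) (T y) > \<epsilon>"
      proof -
        have "\<not> (\<forall>x y. \<epsilon> < dist x y \<and> dist x y < \<epsilon> + \<delta> \<longrightarrow> dist (T x) (T y) \<le> \<epsilon>)"
          using neg \<open>\<delta> > 0\<close> by blast
        then show ?thesis using that by (auto simp: not_le)
      qed
      then have "T x \<noteq> T y" using eps by auto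
      then have "\<phi> (dist x y) + F (dist (T x) (T y)) \<le> F (dist x y)" using contr by blast
      moreover have "dist (T x) (T y) < dist x y" using strict[of x y] xy eps by (cases "x = y") auto
      ultimately show ?thesis using xy unfolding P_def by blast
    qed
    define g where "g = (\<lambda>p::real\<times>real. SOME q. P (fst q) (snd q) \<and> fst q < snd p)"
    obtain a0 b0 where p0: "P a0 b0" using H[of 1] by auto
    define s where "s n = (g ^^ n) (a0, b0)" for n
    have gP: "P (fst (g p)) (snd (g p)) \<and> fst (g p) < snd p" if "P (fst p) (snd p)" for p
    proof -
      have "snd p - \<epsilon> > 0" using that unfolding P_def by (auto split: prod.splits)
      from H[OF this] obtain a b where "P a b" "a < snd p" by auto
      then have "\<exists>q. P (fst q) (snd q) \<and> fst q < snd p" by (intro exI[of _ "(a,b)"]) auto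
      then show ?thesis unfolding g_def by (rule someI_ex)
    qed
    have sP: "P (fst (s n)) (snd (s n))" for n
      by (induction n) (auto simp: s_def p0 gP)
    have sS: "fst (s (Suc n)) < snd (s n)" for n
      using gP[OF sP[of n]] by (simp add: s_def)
    define a where "a n = fst (s n)" for n
    have apos: "\<forall>n. a n > \<epsilon>" using sP by (simp add: a_def P_def) (meson less_trans)
    have adec: "\<forall>n. a (Suc n) < a n" proof
      fix n show "a (Suc n) < a n" using sP[of n] sS[of n] by (simp add: a_def P_def)
    qed
    have aineq: "\<forall>n. \<phi> (a n) \<le> F (a n) - F (a (Suc n))"
    proof
      fix n
      have m: "F (a (Suc n)) \<le> F (snd (s n))"
      proof (rule mono_onD[OF F_mono])
        show "a (Suc n) \<in> {0<..}" using apos eps by (smt (verit) greaterThan_iff)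
        show "snd (s n) \<in> {0<..}" using sP[of n] eps by (simp add: P_def)
        show "a (Suc n) \<le> snd (s n)" using sS[of n] by (simp add: a_def)
      qed
      show "\<phi> (a n) \<le> F (a n) - F (a (Suc n))"
        using sP[of n] m unfolding a_def P_def by auto
    qed
    have "a \<longlonglongrightarrow> 0"
      by (rule lemL[OF F_mono \<phi>_pos \<phi>_prop]) (use apos eps adec aineq in \<open>auto intro: less_trans\<close>)
    then obtain n where "norm (a n - 0) < \<epsilon>" using eps LIMSEQ_D by blast
    then show False using apos[rule_format, of n] by simp
  qed
  have conv: "\<exists>v. T v = v \<and> (\<lambda>n. (T ^^ n) x) \<longlonglongrightarrow> v" for x
  proof -
    define xs where "xs n = (T ^^ n) x" for n
    have xsS: "xs (Suc n) = T (xs n)" for n by (simp add: xs_def)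
    define t where "t n = dist (xs n) (xs (Suc n))" for n
    have tdec: "t (Suc n) \<le> t n" for n using weak[of "xs n" "xs (Suc n)"] by (simp add: t_def xsS)
    have t0: "t \<longlonglongrightarrow> 0"
    proof (cases "\<exists>n. t n = 0")
      case True
      then obtain n where n: "t n = 0" by blast
      have d: "decseq t" by (intro decseq_SucI tdec)
      have "\<forall>m\<ge>n. t m = 0"
      proof (intro allI impI)
        fix m assume "n \<le> m"
        then have "t m \<le> t n" using decseqD[OF d] by blast
        moreover have "t m \<ge> 0" by (simp add: t_def)
        ultimately show "t m = 0" using n by simp
      qed
      then have "eventually (\<lambda>m. t m = 0) sequentially" by (auto simp: eventually_sequentially)
      then show ?thesis by (rule tendsto_eventually)
    next
      case False
      have tpos: "\<forall>n. t n > 0" using False by (simp add: t_def order_le_neq_trans)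
      have tdec': "\<forall>n. t (Suc n) < t n"
      proof
        fix n
        have "xs n \<noteq> xs (Suc n)" using tpos by (metis dist_self less_irrefl t_def)
        then show "t (Suc n) < t n" using strict[of "xs n" "xs (Suc n)"] by (simp add: t_def xsS)
      qed
      have "\<forall>n. \<phi> (t n) \<le> F (t n) - F (t (Suc n))"
      proof
        fix n
        have ne: "T (xs n) \<noteq> T (xs (Suc n))" using tpos[rule_format, of "Suc n"]
          by (simp add: t_def xsS)
        then show "\<phi> (t n) \<le> F (t n) - F (t (Suc n))"
          using contr[rule_format, OF ne] by (simp add: t_def xsS)
      qed
      then show ?thesis by (rule lemL[OF F_mono \<phi>_pos \<phi>_prop tpos tdec'])
    qed
    have "Cauchy xs"
    proof (rule metric_CauchyI)
      fix e :: real assume e: "e > 0"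
      define \<epsilon> where "\<epsilon> = e / 4"
      have eps: "\<epsilon> > 0" using e by (simp add: \<epsilon>_def)
      obtain \<delta> where d: "\<delta> > 0" "\<forall>x y. \<epsilon> < dist x y \<and> dist x y < \<epsilon> + \<delta> \<longrightarrow> dist (T x) (T y) \<le> \<epsilon>"
        using MK[OF eps] by blast
      define \<delta>' where "\<delta>' = min \<delta> \<epsilon>"
      have d': "\<delta>' > 0" using d eps by (simp add: \<delta>'_def)
      obtain N where N: "norm (t N - 0) < \<delta>'" using LIMSEQ_D[OF t0 d'] by blast
      have tN: "t N < \<delta>'" using N by simp
      have ind: "dist (xs N) (xs (N + j)) < \<epsilon> + \<delta>'" for j
      proof (induction j)
        case 0 then show ?case using eps d' by simp
      next
        case (Suc j)
        have "dist (T (xs N)) (T (xs (N + j))) \<le> \<epsilon>"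
        proof (cases "\<epsilon> < dist (xs N) (xs (N + j))")
          case True
          have "\<delta>' \<le> \<delta>" by (simp add: \<delta>'_def)
          then have "dist (xs N) (xs (N + j)) < \<epsilon> + \<delta>" using Suc.IH by linarith
          then show ?thesis using d(2) True by blast
        next
          case False
          then show ?thesis using weak[of "xs N" "xs (N+j)"] by linarith
        qed
        then have "dist (xs (Suc N)) (xs (N + Suc j)) \<le> \<epsilon>" by (simp add: xsS)
        moreover have "dist (xs N) (xs (N + Suc j)) \<le> t N + dist (xs (Suc N)) (xs (N + Suc j))"
          unfolding t_def by (rule dist_triangle)
        ultimately show ?case using tN by linarith
      qed
      show "\<exists>M. \<forall>m\<ge>M. \<forall>n\<ge>M. dist (xs m) (xs n) < e"
      proof (intro exI allI impI)
        fix m n assume "N \<le> m" "N \<le> n"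
        then obtain i j where "m = N + i" "n = N + j" using le_Suc_ex by blast
        then have "dist (xs m) (xs n) \<le> dist (xs N) (xs m) + dist (xs N) (xs n)"
          by (simp add: dist_triangle3)
        also have "\<dots> < 2 * (\<epsilon> + \<delta>')" using ind[of i] ind[of j] \<open>m = N + i\<close> \<open>n = N + j\<close> by simp
        also have "\<dots> \<le> e" unfolding \<epsilon>_def \<delta>'_def by auto
        finally show "dist (xs m) (xs n) < e" .
      qed
    qed
    then obtain v where v: "xs \<longlonglongrightarrow> v" using convergent_eq_Cauchy convergent_def by blast
    have "(\<lambda>n. T (xs n)) \<longlonglongrightarrow> T v"
    proof (rule tendsto_dist_iff[THEN iffD2])
      have "(\<lambda>n. dist (xs n) v) \<longlonglongrightarrow> 0" using v tendsto_dist_iff by blast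
      then show "(\<lambda>n. dist (T (xs n)) (T v)) \<longlonglongrightarrow> 0"
        by (rule Lim_null_comparison[rotated]) (simp add: weak)
    qed
    moreover have "(\<lambda>n. T (xs n)) \<longlonglongrightarrow> v" using LIMSEQ_Suc[OF v] by (simp add: xsS)
    ultimately have "T v = v" using LIMSEQ_unique by blast
    then show ?thesis using v unfolding xs_def by blast
  qed
  obtain u where u: "T u = u" using conv by blast
  show ?thesis unfolding picard_operator_def
  proof (intro exI conjI allI impI)
    show "T u = u" by (rule u)
    show "v = u" if "T v = v" for v using uniq that u by blast
    fix x
    obtain v where "T v = v" "(\<lambda>n. (T ^^ n) x) \<longlonglongrightarrow> v" using conv by blast
    then show "(\<lambda>n. (T ^^ n) x) \<longlonglongrightarrow> u" using uniq u by metis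
  qed
qed

end
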